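(* In a qubit stabilizer subsystem code with encoded qubits $\mathcal{H}_e=\bigotimes_{j=1}^{n_L}\mathcal{H}_j$, let $S\subseteq\{1,\dots,n_L\}$ and let $R$ be a region of physical qubits that obeys complementary recovery and is dressed-cleanable with respect to the logical subsystem given by $S$. Then $R$ is correctable with respect to $S$.
   Context: Stabilizer code: abelian subgroup of the Pauli group not containing $-\mathrm{Id}$, code space its $+1$ eigenspace, encoding isometry $V$ from the encoded space $\bigotimes_j\mathcal{H}_j$ of encoded qubits (with a basis such that codespace-preserving physical Paulis implement encoded Paulis); $\Pi=VV^\dagger$. For $S\subseteq\{1,\dots,n_L\}$, the logical subsystem is $\mathcal{H}_L=\bigotimes_{j\in S}\mathcal{H}_j$ and the junk subsystem $\mathcal{H}_J=\bigotimes_{j\notin S}\mathcal{H}_j$. $A$ is CSP if $[A,\Pi]=0$; dressed-CSP if moreover $V^\dagger AV=A_L\otimes A_J$; bare-CSP if also $A_J=\mathrm{Id}_J$. Supported on $R$: of the form $A_R\otimes\mathrm{Id}_{R^c}$. $R$ is correctable w.r.t. $S$ if every $A_L\in\mathcal{B}(\mathcal{H}_L)$ is implemented as $A_L\otimes\mathrm{Id}_J$ by a bare-CSP operator supported on $R^c$; dressed-cleanable w.r.t. $S$ if every Pauli $P_L$ on $\mathcal{H}_L$ is implemented as $P_L\otimes P_J$ (some $P_J$) by a dressed-CSP operator supported on $R^c$. Maximal entanglement wedge: $\mathcal{E}[R]$ is the set of $j$ such that $R^c$ is correctable w.r.t. $\{j\}$. $R$ obeys complementary recovery if $\mathcal{E}[R]\cup\mathcal{E}[R^c]=\{1,\dots,n_L\}$.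 *)

theory Defs
  imports "Jordan_Normal_Form.Schur_Decomposition"
begin

(* Qubits are indexed 0,1,2,...; a system of m qubits has the computational basis
   indexed by i < 2^m, and bit j of i is the value of qubit j. *)

definition qbits :: "nat \<Rightarrow> nat set" where
  "qbits i = {j. odd (i div 2 ^ j)}"

definition ind :: "nat set \<Rightarrow> nat \<Rightarrow> nat" where
  "ind x j = (if j \<in> x then 1 else 0)"

(* single-qubit Pauli matrices: 0 = Id, 1 = X, 2 = Y, 3 = Z *)
definition pauli_mat :: "nat \<Rightarrow> complex mat" where
  "pauli_mat k = (if k = 1 then mat_of_rows_list 2 [[0,1],[1,0]]
     else if k = 2 then mat_of_rows_list 2 [[0,-\<i>],[\<i>,0]]
     else if k = 3 then mat_of_rows_list 2 [[1,0],[0,-1]]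
     else 1\<^sub>m 2)"

definition pauli_phases :: "complex set" where
  "pauli_phases = {1, -1, \<i>, -\<i>}"

(* Kernel (matrix entries, as a function of basis bitstrings restricted to the qubit set T)
   of the Pauli operator  c * (tensor_{j in T} sigma_{p j})  on the qubits in T *)
definition pauli_fun :: "complex \<Rightarrow> (nat \<Rightarrow> nat) \<Rightarrow> nat set \<Rightarrow> nat set \<Rightarrow> nat set \<Rightarrow> complex" where
  "pauli_fun c p T x y = c * (\<Prod>j\<in>T. pauli_mat (p j) $$ (ind x j, ind y j))"

definition is_pauli_fun :: "nat set \<Rightarrow> (nat set \<Rightarrow> nat set \<Rightarrow> complex) \<Rightarrow> bool" where
  "is_pauli_fun T f \<longleftrightarrow> (\<exists>c p. c \<in> pauli_phases \<and> (\<forall>j. p j < 4) \<and> f = pauli_fun c p T)"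

definition pauli_group :: "nat \<Rightarrow> complex mat set" where
  "pauli_group n = {mat (2^n) (2^n) (\<lambda>(i,k). pauli_fun c p {..<n} (qbits i) (qbits k)) | c p.
      c \<in> pauli_phases \<and> (\<forall>j. p j < 4)}"

(* operator on m qubits of the form  A_T \<otimes> B_{T^c}, with A_T, B given by kernels on
   bitstrings of T and of {..<m} - T respectively *)
definition tensor_split :: "nat \<Rightarrow> nat set \<Rightarrow> (nat set \<Rightarrow> nat set \<Rightarrow> complex)
    \<Rightarrow> (nat set \<Rightarrow> nat set \<Rightarrow> complex) \<Rightarrow> complex mat" where
  "tensor_split m T A B = mat (2^m) (2^m) (\<lambda>(i,k).
      A (qbits i \<inter> T) (qbits k \<inter> T) * B (qbits i \<inter> ({..<m} - T)) (qbits k \<inter> ({..<m} - T)))"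

definition id_fun :: "nat set \<Rightarrow> nat set \<Rightarrow> complex" where
  "id_fun x y = (if x = y then 1 else 0)"

definition supported_on :: "nat \<Rightarrow> nat set \<Rightarrow> complex mat \<Rightarrow> bool" where
  "supported_on n R A \<longleftrightarrow> (\<exists>AR. A = tensor_split n R AR id_fun)"

(* Stabilizer code on n physical qubits with stabilizer group G and encoding isometry V
   from n_L encoded qubits; the basis of the encoded space is such that codespace-preserving
   physical Paulis implement encoded Paulis. *)
definition stabilizer_code :: "nat \<Rightarrow> nat \<Rightarrow> complex mat set \<Rightarrow> complex mat \<Rightarrow> bool" where
  "stabilizer_code n nL G V \<longleftrightarrow>
     G \<subseteq> pauli_group n \<and>
     1\<^sub>m (2^n) \<in> G \<and>
     (\<forall>g\<in>G. \<forall>h\<in>G. g * h \<in> G) \<and>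
     (\<forall>g\<in>G. mat_adjoint g \<in> G) \<and>
     (\<forall>g\<in>G. \<forall>h\<in>G. g * h = h * g) \<and>
     - 1\<^sub>m (2^n) \<notin> G \<and>
     V \<in> carrier_mat (2^n) (2^nL) \<and>
     mat_adjoint V * V = 1\<^sub>m (2^nL) \<and>
     (\<forall>\<psi> \<in> carrier_vec (2^n). (\<forall>g\<in>G. g *\<^sub>v \<psi> = \<psi>) \<longleftrightarrow>
          (\<exists>\<phi> \<in> carrier_vec (2^nL). \<psi> = V *\<^sub>v \<phi>)) \<and>
     (\<forall>P \<in> pauli_group n. P * (V * mat_adjoint V) = (V * mat_adjoint V) * P \<longrightarrow>
          mat_adjoint V * P * V \<in> pauli_group nL)"

definition code_proj :: "complex mat \<Rightarrow> complex mat" where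
  "code_proj V = V * mat_adjoint V"

definition CSP :: "complex mat \<Rightarrow> complex mat \<Rightarrow> bool" where
  "CSP V A \<longleftrightarrow> A * code_proj V = code_proj V * A"

definition dressed_CSP :: "nat \<Rightarrow> complex mat \<Rightarrow> nat set \<Rightarrow> complex mat \<Rightarrow> bool" where
  "dressed_CSP nL V S A \<longleftrightarrow> CSP V A \<and>
     (\<exists>AL AJ. mat_adjoint V * A * V = tensor_split nL S AL AJ)"

definition bare_CSP :: "nat \<Rightarrow> complex mat \<Rightarrow> nat set \<Rightarrow> complex mat \<Rightarrow> bool" where
  "bare_CSP nL V S A \<longleftrightarrow> CSP V A \<and>
     (\<exists>AL. mat_adjoint V * A * V = tensor_split nL S AL id_fun)"

definition correctable :: "nat \<Rightarrow> nat \<Rightarrow> complex mat \<Rightarrow> nat set \<Rightarrow> nat set \<Rightarrow> bool" where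
  "correctable n nL V S R \<longleftrightarrow>
     (\<forall>AL. \<exists>A. A \<in> carrier_mat (2^n) (2^n) \<and> CSP V A \<and> supported_on n ({..<n} - R) A \<and>
        mat_adjoint V * A * V = tensor_split nL S AL id_fun)"

definition dressed_cleanable :: "nat \<Rightarrow> nat \<Rightarrow> complex mat \<Rightarrow> nat set \<Rightarrow> nat set \<Rightarrow> bool" where
  "dressed_cleanable n nL V S R \<longleftrightarrow>
     (\<forall>PL. is_pauli_fun S PL \<longrightarrow> (\<exists>A PJ. is_pauli_fun ({..<nL} - S) PJ \<and>
        A \<in> carrier_mat (2^n) (2^n) \<and> CSP V A \<and> supported_on n ({..<n} - R) A \<and>
        mat_adjoint V * A * V = tensor_split nL S PL PJ))"

definition entanglement_wedge :: "nat \<Rightarrow> nat \<Rightarrow> complex mat \<Rightarrow> nat set \<Rightarrow> nat set" where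
  "entanglement_wedge n nL V R = {j. j < nL \<and> correctable n nL V {j} ({..<n} - R)}"

definition complementary_recovery :: "nat \<Rightarrow> nat \<Rightarrow> complex mat \<Rightarrow> nat set \<Rightarrow> bool" where
  "complementary_recovery n nL V R \<longleftrightarrow>
     entanglement_wedge n nL V R \<union> entanglement_wedge n nL V ({..<n} - R) = {..<nL}"

end

theory Submission
  imports Defs
begin


lemma qbits_sub: "i < 2^m \<Longrightarrow> qbits i \<subseteq> {..<m}"
proof
  fix j assume i: "i < 2^m" and "j \<in> qbits i"
  then have "odd (i div 2^j)" by (simp add: qbits_def)
  then have "i div 2^j \<noteq> 0" by (metis even_zero)
  then have "2^j \<le> i" by (simp add: div_eq_0_iff)
  with i have "(2::nat)^j < 2^m" by linarith
  then show "j \<in> {..<m}" by simp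
qed

lemma qbits_inj: "qbits i = qbits k \<Longrightarrow> i = k"
  by (simp add: qbits_def bit_eq_iff bit_iff_odd set_eq_iff)

lemma qbits_bij: "bij_betw qbits {..<2^m} (Pow {..<m})"
proof -
  have inj: "inj_on qbits {..<2^m}" by (meson inj_onI qbits_inj)
  have sub: "qbits ` {..<2^m} \<subseteq> Pow {..<m}" using qbits_sub by auto
  have "card (qbits ` {..<2^m}) = card (Pow {..<(m::nat)})"
    using card_image[OF inj] by (simp add: card_Pow)
  then have "qbits ` {..<2^m} = Pow {..<m}"
    using sub by (intro card_subset_eq) auto
  with inj show ?thesis by (simp add: bij_betw_def)
qed

definition kop :: "nat \<Rightarrow> (nat set \<Rightarrow> nat set \<Rightarrow> complex) \<Rightarrow> complex mat" where
  "kop m K = mat (2^m) (2^m) (\<lambda>(i,k). K (qbits i) (qbits k))"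

lemma kop_carrier[simp]: "kop m K \<in> carrier_mat (2^m) (2^m)"
  by (simp add: kop_def)

lemma kop_dim[simp]: "dim_row (kop m K) = 2^m" "dim_col (kop m K) = 2^m"
  by (simp_all add: kop_def)

lemma ts_kop: "tensor_split m T A B = kop m (\<lambda>x y. A (x \<inter> T) (y \<inter> T) * B (x \<inter> ({..<m} - T)) (y \<inter> ({..<m} - T)))"
  by (simp add: tensor_split_def kop_def)

lemma kop_eq: assumes "\<And>x y. x \<subseteq> {..<m} \<Longrightarrow> y \<subseteq> {..<m} \<Longrightarrow> K1 x y = K2 x y"
  shows "kop m K1 = kop m K2"
proof (rule eq_matI)
  fix i k assume "i < dim_row (kop m K2)" "k < dim_col (kop m K2)"
  then show "kop m K1 $$ (i, k) = kop m K2 $$ (i, k)" using assms qbits_sub by (simp add: kop_def)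
qed auto

lemma kop_add: "kop m K1 + kop m K2 = kop m (\<lambda>x y. K1 x y + K2 x y)"
  unfolding kop_def by (rule eq_matI) auto

lemma kop_smult: "c \<cdot>\<^sub>m kop m K = kop m (\<lambda>x y. c * K x y)"
  unfolding kop_def by (rule eq_matI) auto


lemma kop_eqD:
  assumes "kop m K1 = kop m K2" "x \<subseteq> {..<m}" "y \<subseteq> {..<m}"
  shows "K1 x y = K2 x y"
proof -
  have im: "qbits ` {..<2^m} = Pow {..<m}" using qbits_bij[of m] unfolding bij_betw_def by (rule conjunct2)
  have "x \<in> qbits ` {..<2^m}" "y \<in> qbits ` {..<2^m}" using assms(2,3) unfolding im by auto
  then obtain i k where i: "i < 2^m" "x = qbits i" and k: "k < 2^m" "y = qbits k" by auto
  have "kop m K1 $$ (i,k) = kop m K2 $$ (i,k)" using assms(1) by (rule arg_cong)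
  then show ?thesis using i k by (simp add: kop_def)
qed

lemma kop_mult: "kop m K1 * kop m K2 = kop m (\<lambda>x y. \<Sum>z\<in>Pow {..<m}. K1 x z * K2 z y)"
proof (rule eq_matI)
  fix i k assume i: "i < dim_row (kop m (\<lambda>x y. \<Sum>z\<in>Pow {..<m}. K1 x z * K2 z y))"
    and k: "k < dim_col (kop m (\<lambda>x y. \<Sum>z\<in>Pow {..<m}. K1 x z * K2 z y))"
  have i': "i < 2^m" and k': "k < 2^m" using i k by auto
  have "(kop m K1 * kop m K2) $$ (i,k) = row (kop m K1) i \<bullet> col (kop m K2) k"
    using i' k' by (simp add: index_mult_mat)
  also have "\<dots> = (\<Sum>l\<in>{0..<2^m}. K1 (qbits i) (qbits l) * K2 (qbits l) (qbits k))"
    unfolding scalar_prod_def using i' k' by (intro sum.cong) (auto simp: kop_def)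
  also have "\<dots> = (\<Sum>l<2^m. K1 (qbits i) (qbits l) * K2 (qbits l) (qbits k))"
    by (simp add: atLeast0LessThan)
  also have "\<dots> = (\<Sum>z\<in>Pow {..<m}. K1 (qbits i) z * K2 z (qbits k))"
    by (rule sum.reindex_bij_betw[OF qbits_bij])
  finally show "(kop m K1 * kop m K2) $$ (i,k) = kop m (\<lambda>x y. \<Sum>z\<in>Pow {..<m}. K1 x z * K2 z y) $$ (i,k)"
    using i' k' by (simp add: kop_def)
qed auto

lemma sum_single:
  assumes "finite A" "a \<in> A" "\<And>z. z \<in> A \<Longrightarrow> z \<noteq> a \<Longrightarrow> f z = 0"
  shows "sum f A = f a"
proof -
  have "sum f A = f a + sum f (A - {a})" using assms(1,2) by (simp add: sum.remove)
  also have "sum f (A - {a}) = 0" using assms(3) by (intro sum.neutral) auto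
  finally show ?thesis by simp
qed


lemma adj_carrier: "V \<in> carrier_mat N L \<Longrightarrow> mat_adjoint V \<in> carrier_mat L N"
  by (auto simp: mat_adjoint_def)

locale enc =
  fixes V Vh :: "complex mat" and N L :: nat
  assumes V: "V \<in> carrier_mat N L" and Vh: "Vh \<in> carrier_mat L N" and iso: "Vh * V = 1\<^sub>m L"
begin

definition csp where "csp A \<longleftrightarrow> A \<in> carrier_mat N N \<and> A * (V * Vh) = (V * Vh) * A"

lemmas AS = assoc_mult_mat[of _ N N _ N _ N] assoc_mult_mat[of _ N N _ N _ L] assoc_mult_mat[of _ N N _ L _ N] assoc_mult_mat[of _ N N _ L _ L] assoc_mult_mat[of _ N L _ N _ N] assoc_mult_mat[of _ N L _ N _ L] assoc_mult_mat[of _ N L _ L _ N] assoc_mult_mat[of _ N L _ L _ L] assoc_mult_mat[of _ L N _ N _ N] assoc_mult_mat[of _ L N _ N _ L] assoc_mult_mat[of _ L N _ L _ N] assoc_mult_mat[of _ L N _ L _ L] assoc_mult_mat[of _ L L _ N _ N] assoc_mult_mat[of _ L L _ N _ L] assoc_mult_mat[of _ L L _ L _ N] assoc_mult_mat[of _ L L _ L _ L]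

lemma compress_mult:
  assumes A: "A \<in> carrier_mat N N" and B: "csp B"
  shows "Vh * (A * B) * V = (Vh * A * V) * (Vh * B * V)"
proof -
  have Bc: "B \<in> carrier_mat N N" and Bp: "B * (V * Vh) = (V * Vh) * B" using B by (auto simp: csp_def)
  have "(Vh * A * V) * (Vh * B * V) = Vh * A * ((V * Vh) * B) * V"
    using A Bc V Vh by (simp add: AS)
  also have "\<dots> = Vh * A * (B * (V * Vh)) * V" using Bp by simp
  also have "\<dots> = Vh * (A * B) * V * (Vh * V)"
    using A Bc V Vh by (simp add: AS)
  also have "\<dots> = Vh * (A * B) * V" using iso A Bc V Vh by simp
  finally show ?thesis by simp
qed

lemma csp_mult: assumes "csp A" "csp B" shows "csp (A * B)"
proof -
  have A: "A \<in> carrier_mat N N" and A2: "A * (V * Vh) = (V * Vh) * A"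
   and B: "B \<in> carrier_mat N N" and B2: "B * (V * Vh) = (V * Vh) * B" using assms by (auto simp: csp_def)
  have P: "V * Vh \<in> carrier_mat N N" using V Vh by simp
  have "A * B * (V * Vh) = A * (B * (V * Vh))" using A B P by (rule assoc_mult_mat)
  also have "\<dots> = A * ((V * Vh) * B)" using B2 by simp
  also have "\<dots> = (A * (V * Vh)) * B" using A P B by (rule assoc_mult_mat[symmetric])
  also have "\<dots> = ((V * Vh) * A) * B" using A2 by simp
  also have "\<dots> = (V * Vh) * (A * B)" using P A B by (rule assoc_mult_mat)
  finally show ?thesis using A B by (simp add: csp_def)
qed

lemma csp_add: assumes "csp A" "csp B" shows "csp (A + B)"
proof -
  have A: "A \<in> carrier_mat N N" "A * (V * Vh) = (V * Vh) * A"
   and B: "B \<in> carrier_mat N N" "B * (V * Vh) = (V * Vh) * B" using assms by (auto simp: csp_def)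
  have "(A + B) * (V * Vh) = A * (V * Vh) + B * (V * Vh)"
    using A B V Vh by (intro add_mult_distrib_mat) auto
  also have "\<dots> = (V * Vh) * A + (V * Vh) * B" using A B by simp
  also have "\<dots> = (V * Vh) * (A + B)"
    using A B V Vh by (intro mult_add_distrib_mat[symmetric]) auto
  finally show ?thesis using A B by (simp add: csp_def)
qed

lemma csp_smult: assumes "csp A" shows "csp (c \<cdot>\<^sub>m A)"
proof -
  have A: "A \<in> carrier_mat N N" and A2: "A * (V * Vh) = (V * Vh) * A" using assms by (auto simp: csp_def)
  have P: "V * Vh \<in> carrier_mat N N" using V Vh by simp
  have "(c \<cdot>\<^sub>m A) * (V * Vh) = c \<cdot>\<^sub>m (A * (V * Vh))" by (rule mult_smult_assoc_mat[OF A P])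
  also have "\<dots> = c \<cdot>\<^sub>m ((V * Vh) * A)" using A2 by simp
  also have "\<dots> = (V * Vh) * (c \<cdot>\<^sub>m A)" by (rule mult_smult_distrib[OF P A, symmetric])
  finally show ?thesis using A by (simp add: csp_def)
qed

lemma csp_one: "csp (1\<^sub>m N)"
  using V Vh by (simp add: csp_def)

lemma compress_add: assumes "A \<in> carrier_mat N N" "B \<in> carrier_mat N N"
  shows "Vh * (A + B) * V = Vh * A * V + Vh * B * V"
proof -
  have "Vh * (A + B) = Vh * A + Vh * B" using assms Vh by (intro mult_add_distrib_mat) auto
  then have "Vh * (A + B) * V = (Vh * A + Vh * B) * V" by simp
  also have "\<dots> = Vh * A * V + Vh * B * V" using assms Vh V by (intro add_mult_distrib_mat) auto
  finally show ?thesis .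
qed

lemma compress_smult: assumes "A \<in> carrier_mat N N"
  shows "Vh * (c \<cdot>\<^sub>m A) * V = c \<cdot>\<^sub>m (Vh * A * V)"
  using assms V Vh by (simp add: mult_smult_distrib[of _ L N] mult_smult_assoc_mat[of _ L N])

lemma compress_one: "Vh * 1\<^sub>m N * V = 1\<^sub>m L"
  using V Vh iso by simp

end


lemma kop_id: "kop m id_fun = 1\<^sub>m (2^m)"
  by (rule eq_matI) (auto simp: kop_def id_fun_def dest: qbits_inj)

lemma ts_add: "tensor_split m T A id_fun + tensor_split m T B id_fun = tensor_split m T (\<lambda>x y. A x y + B x y) id_fun"
  unfolding ts_kop kop_add by (rule kop_eq) (simp add: distrib_right)

lemma ts_smult: "c \<cdot>\<^sub>m tensor_split m T A id_fun = tensor_split m T (\<lambda>x y. c * A x y) id_fun"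
  unfolding ts_kop kop_smult by (rule kop_eq) simp

lemma ts_empty: "tensor_split m {} A id_fun = A {} {} \<cdot>\<^sub>m 1\<^sub>m (2^m)"
proof -
  have "tensor_split m {} A id_fun = kop m (\<lambda>x y. A {} {} * id_fun x y)"
    unfolding ts_kop by (rule kop_eq) (simp add: Int_absorb1 Int_absorb2)
  then show ?thesis by (simp add: kop_smult[symmetric] kop_id)
qed

lemma ts_prod_disj:
  assumes T: "T \<subseteq> {..<m}" and U: "U \<subseteq> {..<m}" and TU: "T \<inter> U = {}"
  shows "tensor_split m T A id_fun * tensor_split m U B id_fun =
         tensor_split m (T \<union> U) (\<lambda>x y. A (x \<inter> T) (y \<inter> T) * B (x \<inter> U) (y \<inter> U)) id_fun"
  unfolding ts_kop kop_mult
proof (rule kop_eq)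
  fix x y assume x: "x \<subseteq> {..<m}" and y: "y \<subseteq> {..<m}"
  define M where "M = {..<m}"
  let ?g = "\<lambda>z. A (x \<inter> T) (z \<inter> T) * id_fun (x \<inter> (M - T)) (z \<inter> (M - T)) *
          (B (z \<inter> U) (y \<inter> U) * id_fun (z \<inter> (M - U)) (y \<inter> (M - U)))"
  show "(\<Sum>z\<in>Pow {..<m}. A (x \<inter> T) (z \<inter> T) * id_fun (x \<inter> ({..<m} - T)) (z \<inter> ({..<m} - T)) *
          (B (z \<inter> U) (y \<inter> U) * id_fun (z \<inter> ({..<m} - U)) (y \<inter> ({..<m} - U)))) =
        A (x \<inter> (T \<union> U) \<inter> T) (y \<inter> (T \<union> U) \<inter> T) * B (x \<inter> (T \<union> U) \<inter> U) (y \<inter> (T \<union> U) \<inter> U) *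
        id_fun (x \<inter> ({..<m} - (T \<union> U))) (y \<inter> ({..<m} - (T \<union> U)))"
    (is "?L = ?R")
  proof (cases "x \<inter> (M - (T \<union> U)) = y \<inter> (M - (T \<union> U))")
    case True
    define z0 where "z0 = (x \<inter> (M - T)) \<union> (y \<inter> T)"
    have z0: "z0 \<in> Pow M" unfolding z0_def using y T by (auto simp: M_def)
    have z0T: "z0 \<inter> T = y \<inter> T" and z0MT: "z0 \<inter> (M - T) = x \<inter> (M - T)"
      unfolding z0_def by auto
    have z0U: "z0 \<inter> U = x \<inter> U" unfolding z0_def using TU U by (auto simp: M_def)
    have z0MU: "z0 \<inter> (M - U) = y \<inter> (M - U)"
    proof -
      have "z0 \<inter> (M - U) = (x \<inter> (M - (T \<union> U))) \<union> (y \<inter> T)" unfolding z0_def using TU T by (auto simp: M_def)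
      also have "\<dots> = (y \<inter> (M - (T \<union> U))) \<union> (y \<inter> T)" using True by simp
      also have "\<dots> = y \<inter> (M - U)" using TU T by (auto simp: M_def)
      finally show ?thesis .
    qed
    have "?L = ?g z0"
      unfolding M_def[symmetric]
    proof (rule sum_single)
      show "finite (Pow M)" by (simp add: M_def)
      show "z0 \<in> Pow M" by (rule z0)
      fix z assume z: "z \<in> Pow M" "z \<noteq> z0"
      have "z \<inter> (M - T) \<noteq> x \<inter> (M - T) \<or> z \<inter> (M - U) \<noteq> y \<inter> (M - U)"
      proof (rule ccontr)
        assume "\<not> ?thesis"
        then have a: "z \<inter> (M - T) = z0 \<inter> (M - T)" and b: "z \<inter> (M - U) = z0 \<inter> (M - U)"
          using z0MT z0MU by auto
        have "z = z0"
        proof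
          show "z \<subseteq> z0"
          proof
            fix w assume w: "w \<in> z"
            then have wM: "w \<in> M" using z by auto
            show "w \<in> z0"
            proof (cases "w \<in> T")
              case True then have "w \<notin> U" using TU by auto
              then show ?thesis using b w wM by blast
            next
              case False then show ?thesis using a w wM by blast
            qed
          qed
          show "z0 \<subseteq> z"
          proof
            fix w assume w: "w \<in> z0"
            then have wM: "w \<in> M" using z0 by auto
            show "w \<in> z"
            proof (cases "w \<in> T")
              case True then have "w \<notin> U" using TU by auto
              then show ?thesis using b w wM by blast
            next
              case False then show ?thesis using a w wM by blast
            qed
          qed
        qed
        with z show False by simp
      qed
      then show "?g z = 0" by (auto simp: id_fun_def)
    qed
    also have "\<dots> = ?R"
      using z0T z0MT z0U z0MU True TU by (simp add: id_fun_def M_def Int_assoc Int_absorb2)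
    finally show ?thesis .
  next
    case False
    have "?L = 0" unfolding M_def[symmetric]
    proof (rule sum.neutral, rule ballI)
      fix z assume "z \<in> Pow M"
      show "?g z = 0"
      proof (cases "x \<inter> (M - T) = z \<inter> (M - T) \<and> z \<inter> (M - U) = y \<inter> (M - U)")
        case True
        then have "x \<inter> (M - (T \<union> U)) = y \<inter> (M - (T \<union> U))" by blast
        with False show ?thesis by simp
      next
        case False then show ?thesis by (auto simp: id_fun_def)
      qed
    qed
    moreover have "?R = 0" using False by (simp add: id_fun_def M_def)
    ultimately show ?thesis by simp
  qed
qed



lemma ts_prod_same:
  assumes T: "T \<subseteq> {..<m}"
  shows "tensor_split m T A id_fun * tensor_split m T B id_fun =
         tensor_split m T (\<lambda>x y. \<Sum>c\<in>Pow T. A x c * B c y) id_fun"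
  unfolding ts_kop kop_mult
proof (rule kop_eq)
  fix x y assume x: "x \<subseteq> {..<m}" and y: "y \<subseteq> {..<m}"
  define M where "M = {..<m}"
  let ?g = "\<lambda>z. A (x \<inter> T) (z \<inter> T) * id_fun (x \<inter> (M - T)) (z \<inter> (M - T)) *
          (B (z \<inter> T) (y \<inter> T) * id_fun (z \<inter> (M - T)) (y \<inter> (M - T)))"
  show "(\<Sum>z\<in>Pow {..<m}. A (x \<inter> T) (z \<inter> T) * id_fun (x \<inter> ({..<m} - T)) (z \<inter> ({..<m} - T)) *
          (B (z \<inter> T) (y \<inter> T) * id_fun (z \<inter> ({..<m} - T)) (y \<inter> ({..<m} - T)))) =
        (\<Sum>c\<in>Pow T. A (x \<inter> T) c * B c (y \<inter> T)) * id_fun (x \<inter> ({..<m} - T)) (y \<inter> ({..<m} - T))"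
    (is "?L = ?R")
  proof (cases "x \<inter> (M - T) = y \<inter> (M - T)")
    case True
    define h where "h = (\<lambda>c. c \<union> (x \<inter> (M - T)))"
    have hsub: "h ` Pow T \<subseteq> Pow M" using T by (auto simp: h_def M_def)
    have hinj: "inj_on h (Pow T)"
    proof (rule inj_onI)
      fix c d assume "c \<in> Pow T" "d \<in> Pow T" "h c = h d"
      then have "h c \<inter> T = h d \<inter> T" by simp
      moreover have "h c \<inter> T = c" "h d \<inter> T = d" using \<open>c \<in> Pow T\<close> \<open>d \<in> Pow T\<close> by (auto simp: h_def)
      ultimately show "c = d" by simp
    qed
    have "?L = sum ?g (Pow M)" by (simp add: M_def)
    also have "\<dots> = sum ?g (h ` Pow T)"
    proof (rule sum.mono_neutral_right)
      show "finite (Pow M)" by (simp add: M_def)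
      show "h ` Pow T \<subseteq> Pow M" by (rule hsub)
      show "\<forall>z\<in>Pow M - h ` Pow T. ?g z = 0"
      proof
        fix z assume z: "z \<in> Pow M - h ` Pow T"
        have "z \<inter> (M - T) \<noteq> x \<inter> (M - T)"
        proof
          assume e: "z \<inter> (M - T) = x \<inter> (M - T)"
          have "z = h (z \<inter> T)" using z e unfolding h_def by blast
          then have "z \<in> h ` Pow T" by blast
          with z show False by simp
        qed
        then show "?g z = 0" by (auto simp: id_fun_def)
      qed
    qed
    also have "\<dots> = sum (?g \<circ> h) (Pow T)" by (rule sum.reindex[OF hinj])
    also have "\<dots> = (\<Sum>c\<in>Pow T. A (x \<inter> T) c * B c (y \<inter> T))"
    proof (rule sum.cong)
      fix c assume c: "c \<in> Pow T"
      have 1: "h c \<inter> T = c" using c by (auto simp: h_def)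
      have 2: "h c \<inter> (M - T) = x \<inter> (M - T)" using c by (auto simp: h_def)
      show "(?g \<circ> h) c = A (x \<inter> T) c * B c (y \<inter> T)"
        using 1 2 True by (simp add: id_fun_def)
    qed simp
    also have "\<dots> = ?R" using True by (simp add: id_fun_def M_def)
    finally show ?thesis .
  next
    case False
    have "?L = 0" unfolding M_def[symmetric]
    proof (rule sum.neutral, rule ballI)
      fix z assume "z \<in> Pow M"
      show "?g z = 0"
      proof (cases "x \<inter> (M - T) = z \<inter> (M - T) \<and> z \<inter> (M - T) = y \<inter> (M - T)")
        case True
        with False show ?thesis by simp
      next
        case False then show ?thesis by (auto simp: id_fun_def)
      qed
    qed
    moreover have "?R = 0" using False by (simp add: id_fun_def M_def)
    ultimately show ?thesis by simp
  qed
qed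

lemma supp_mult: assumes "T \<subseteq> {..<m}" "supported_on m T A" "supported_on m T B"
  shows "supported_on m T (A * B)"
  using assms ts_prod_same unfolding supported_on_def by blast

lemma supp_add: assumes "supported_on m T A" "supported_on m T B"
  shows "supported_on m T (A + B)"
  using assms ts_add unfolding supported_on_def by metis

lemma supp_smult: assumes "supported_on m T A"
  shows "supported_on m T (c \<cdot>\<^sub>m A)"
  using assms ts_smult unfolding supported_on_def by metis

lemma supp_one: "supported_on m T (1\<^sub>m (2^m))"
proof -
  have "tensor_split m T id_fun id_fun = kop m id_fun"
    unfolding ts_kop by (rule kop_eq) (auto simp: id_fun_def)
  then show ?thesis unfolding supported_on_def kop_id by metis
qed



lemma pauli_nz: "k < 4 \<Longrightarrow> pauli_mat k $$ (0, if k = 1 \<or> k = 2 then 1 else 0) \<noteq> 0"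
proof -
  assume "k < 4"
  then have "k = 0 \<or> k = 1 \<or> k = 2 \<or> k = 3" by auto
  then show ?thesis by (auto simp: pauli_mat_def mat_of_rows_list_def)
qed

lemma phase_nz: "c \<in> pauli_phases \<Longrightarrow> c \<noteq> 0"
  by (auto simp: pauli_phases_def)

lemma pauli_fun_nz:
  assumes "c \<noteq> 0" "finite T" "\<forall>i\<in>T. p i < 4" "\<forall>i\<in>T. i \<notin> x"
    "\<forall>i\<in>T. (i \<in> y \<longleftrightarrow> (p i = 1 \<or> p i = 2))"
  shows "pauli_fun c p T x y \<noteq> 0"
proof -
  have "\<forall>i\<in>T. pauli_mat (p i) $$ (ind x i, ind y i) \<noteq> 0"
  proof
    fix i assume i: "i \<in> T"
    have "ind x i = 0" "ind y i = (if p i = 1 \<or> p i = 2 then 1 else 0)"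
      using assms(4,5) i by (auto simp: ind_def)
    then show "pauli_mat (p i) $$ (ind x i, ind y i) \<noteq> 0" using pauli_nz assms(3) i by simp
  qed
  then show ?thesis using assms(1,2) by (simp add: pauli_fun_def prod_zero_iff)
qed



locale mainloc =
  fixes V :: "complex mat" and n nL :: nat and R :: "nat set"
  assumes Vc: "V \<in> carrier_mat (2^n) (2^nL)" and isoV: "mat_adjoint V * V = 1\<^sub>m (2^nL)"
    and Rsub: "R \<subseteq> {..<n}"
begin

sublocale enc V "mat_adjoint V" "2^n" "2^nL"
  using Vc isoV adj_carrier[OF Vc] by unfold_locales auto

lemma csp_iff: "csp A \<longleftrightarrow> A \<in> carrier_mat (2^n) (2^n) \<and> CSP V A"
  by (simp add: csp_def CSP_def code_proj_def)

definition impl where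
  "impl T K \<longleftrightarrow> (\<exists>A. csp A \<and> supported_on n ({..<n} - R) A \<and>
      mat_adjoint V * A * V = tensor_split nL T K id_fun)"

lemma impl_empty: "impl {} K"
  unfolding impl_def
proof (intro exI conjI)
  show "csp (K {} {} \<cdot>\<^sub>m 1\<^sub>m (2^n))" by (intro csp_smult csp_one)
  show "supported_on n ({..<n} - R) (K {} {} \<cdot>\<^sub>m 1\<^sub>m (2^n))" by (intro supp_smult supp_one)
  show "mat_adjoint V * (K {} {} \<cdot>\<^sub>m 1\<^sub>m (2^n)) * V = tensor_split nL {} K id_fun"
    by (simp add: compress_smult compress_one ts_empty)
qed

lemma impl_add: assumes "impl T K1" "impl T K2" shows "impl T (\<lambda>x y. K1 x y + K2 x y)"
proof -
  obtain A where A: "csp A" "supported_on n ({..<n} - R) A" "mat_adjoint V * A * V = tensor_split nL T K1 id_fun"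
    using assms(1) impl_def by blast
  obtain B where B: "csp B" "supported_on n ({..<n} - R) B" "mat_adjoint V * B * V = tensor_split nL T K2 id_fun"
    using assms(2) impl_def by blast
  have "mat_adjoint V * (A + B) * V = tensor_split nL T (\<lambda>x y. K1 x y + K2 x y) id_fun"
    using A B by (simp add: compress_add csp_def ts_add)
  then show ?thesis unfolding impl_def using A B csp_add supp_add by blast
qed

lemma impl_mult: assumes "T \<subseteq> {..<nL}" "U \<subseteq> {..<nL}" "T \<inter> U = {}" "impl T K1" "impl U K2"
  shows "impl (T \<union> U) (\<lambda>x y. K1 (x \<inter> T) (y \<inter> T) * K2 (x \<inter> U) (y \<inter> U))"
proof -
  obtain A where A: "csp A" "supported_on n ({..<n} - R) A" "mat_adjoint V * A * V = tensor_split nL T K1 id_fun"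
    using assms(4) impl_def by blast
  obtain B where B: "csp B" "supported_on n ({..<n} - R) B" "mat_adjoint V * B * V = tensor_split nL U K2 id_fun"
    using assms(5) impl_def by blast
  have "mat_adjoint V * (A * B) * V = (mat_adjoint V * A * V) * (mat_adjoint V * B * V)"
    using A B by (intro compress_mult) (auto simp: csp_def)
  also have "\<dots> = tensor_split nL (T \<union> U) (\<lambda>x y. K1 (x \<inter> T) (y \<inter> T) * K2 (x \<inter> U) (y \<inter> U)) id_fun"
    using A(3) B(3) ts_prod_disj[OF assms(1-3)] by simp
  finally show ?thesis unfolding impl_def using A B csp_mult supp_mult[of "{..<n} - R" n] by blast
qed

lemma impl_cong: assumes "impl T K" "\<And>x y. x \<subseteq> T \<Longrightarrow> y \<subseteq> T \<Longrightarrow> K x y = K' x y"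
  shows "impl T K'"
proof -
  have "tensor_split nL T K id_fun = tensor_split nL T K' id_fun"
    unfolding ts_kop by (rule kop_eq) (simp add: assms(2))
  then show ?thesis using assms(1) by (simp add: impl_def)
qed

end

context mainloc begin

lemma impl_all: "finite T \<Longrightarrow> T \<subseteq> {..<nL} \<Longrightarrow> (\<forall>j\<in>T. \<forall>E. impl {j} E) \<Longrightarrow> \<forall>K. impl T K"
proof (induction T rule: finite_induct)
  case empty
  show ?case using impl_empty by blast
next
  case (insert j T)
  show ?case
  proof
  fix K :: "nat set \<Rightarrow> nat set \<Rightarrow> complex"
  have T: "T \<subseteq> {..<nL}" and j: "j < nL" using insert.prems by auto
  have IH: "\<And>K. impl T K" using insert by auto
  have Ej: "\<And>E. impl {j} E" using insert.prems by auto
  define G where "G = (\<lambda>a b x y. (if x \<inter> {j} = a \<and> y \<inter> {j} = b then 1 else 0) * K ((x \<inter> T) \<union> a) ((y \<inter> T) \<union> b))"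
  have Gi: "impl (insert j T) (G a b)" for a b
  proof -
    have "impl ({j} \<union> T) (\<lambda>x y. (\<lambda>u v. if u = a \<and> v = b then 1 else 0) (x \<inter> {j}) (y \<inter> {j}) *
        (\<lambda>u v. K (u \<union> a) (v \<union> b)) (x \<inter> T) (y \<inter> T))"
      using j T insert.hyps(2) by (intro impl_mult Ej IH) auto
    then show ?thesis by (simp add: G_def)
  qed
  have a1: "impl (insert j T) (\<lambda>x y. G {} {} x y + G {} {j} x y)"
    using impl_add[OF Gi Gi] .
  have a2: "impl (insert j T) (\<lambda>x y. G {j} {} x y + G {j} {j} x y)"
    using impl_add[OF Gi Gi] .
  have "impl (insert j T) (\<lambda>x y. (G {} {} x y + G {} {j} x y) + (G {j} {} x y + G {j} {j} x y))"
    using impl_add[OF a1 a2] .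
  then show "impl (insert j T) K"
  proof (rule impl_cong)
    fix x y assume x: "x \<subseteq> insert j T" and y: "y \<subseteq> insert j T"
    have xx: "(x \<inter> T) \<union> (x \<inter> {j}) = x" and yy: "(y \<inter> T) \<union> (y \<inter> {j}) = y" using x y by auto
    have xj: "x \<inter> {j} = (if j \<in> x then {j} else {})" and yj: "y \<inter> {j} = (if j \<in> y then {j} else {})" by auto
    show "(G {} {} x y + G {} {j} x y) + (G {j} {} x y + G {j} {j} x y) = K x y"
      unfolding G_def using xx yy xj yj by (cases "j \<in> x"; cases "j \<in> y") auto
  qed
  qed
qed

end

context mainloc begin

lemma single:
  assumes cr: "complementary_recovery n nL V R" and dc: "dressed_cleanable n nL V S R"
    and S: "S \<subseteq> {..<nL}" and jS: "j \<in> S"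
  shows "impl {j} E"
proof -
  have jL: "j < nL" using S jS by auto
  have RR: "{..<n} - ({..<n} - R) = R" using Rsub by auto
  have "j \<in> entanglement_wedge n nL V R \<union> entanglement_wedge n nL V ({..<n} - R)"
    using cr jL unfolding complementary_recovery_def by auto
  moreover have False if jw: "j \<in> entanglement_wedge n nL V R"
  proof -
    define LL where "LL = {..<nL}"
    define J where "J = LL - S"
    define Vh where "Vh = mat_adjoint V"
    define P0 :: "nat set \<Rightarrow> nat set \<Rightarrow> complex" where "P0 = (\<lambda>a b. if a = {} \<and> b = {} then 1 else 0)"
    have "correctable n nL V {j} ({..<n} - R)" using jw by (simp add: entanglement_wedge_def)
    then obtain A where A: "A \<in> carrier_mat (2^n) (2^n)" "CSP V A" "supported_on n R A"
        "Vh * A * V = tensor_split nL {j} P0 id_fun"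
      unfolding correctable_def RR Vh_def by blast
    define p :: "nat \<Rightarrow> nat" where "p = (\<lambda>i. if i = j then 1 else 0)"
    define PL where "PL = pauli_fun 1 p S"
    have "is_pauli_fun S PL" unfolding is_pauli_fun_def PL_def
      by (rule exI[of _ 1], rule exI[of _ p]) (auto simp: pauli_phases_def p_def)
    then obtain B PJ where B: "is_pauli_fun J PJ" "B \<in> carrier_mat (2^n) (2^n)" "CSP V B"
        "supported_on n ({..<n} - R) B" "Vh * B * V = tensor_split nL S PL PJ"
      using dc unfolding dressed_cleanable_def J_def LL_def Vh_def by blast
    obtain c' p' where PJ: "c' \<in> pauli_phases" "\<forall>i. p' i < 4" "PJ = pauli_fun c' p' J"
      using B(1) unfolding is_pauli_fun_def by blast
    obtain AR where AR: "A = tensor_split n R AR id_fun" using A(3) supported_on_def by blast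
    obtain BR where BR: "B = tensor_split n ({..<n} - R) BR id_fun" using B(4) supported_on_def by blast
    have AB: "A * B = B * A"
    proof -
      have "A * B = tensor_split n (R \<union> ({..<n} - R)) (\<lambda>x y. AR (x \<inter> R) (y \<inter> R) * BR (x \<inter> ({..<n} - R)) (y \<inter> ({..<n} - R))) id_fun"
        unfolding AR BR using Rsub by (intro ts_prod_disj) auto
      also have "\<dots> = tensor_split n (({..<n} - R) \<union> R) (\<lambda>x y. BR (x \<inter> ({..<n} - R)) (y \<inter> ({..<n} - R)) * AR (x \<inter> R) (y \<inter> R)) id_fun"
        by (simp add: Un_commute mult.commute)
      also have "\<dots> = B * A"
        unfolding AR BR using Rsub by (intro ts_prod_disj[symmetric]) auto
      finally show ?thesis .
    qed
    have cA: "csp A" and cB: "csp B" using A B csp_iff by auto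
    have "(Vh * A * V) * (Vh * B * V) = (Vh * B * V) * (Vh * A * V)"
      unfolding Vh_def using compress_mult[OF A(1) cB] compress_mult[OF B(2) cA] AB by simp
    then have DQ: "tensor_split nL {j} P0 id_fun * tensor_split nL S PL PJ = tensor_split nL S PL PJ * tensor_split nL {j} P0 id_fun"
      using A(4) B(5) by simp
    define Dk where "Dk = (\<lambda>x y. P0 (x \<inter> {j}) (y \<inter> {j}) * id_fun (x \<inter> (LL - {j})) (y \<inter> (LL - {j})))"
    define Qk where "Qk = (\<lambda>x y. PL (x \<inter> S) (y \<inter> S) * PJ (x \<inter> (LL - S)) (y \<inter> (LL - S)))"
    have "kop nL (\<lambda>x y. \<Sum>z\<in>Pow LL. Dk x z * Qk z y) = kop nL (\<lambda>x y. \<Sum>z\<in>Pow LL. Qk x z * Dk z y)"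
      using DQ unfolding ts_kop kop_mult Dk_def Qk_def LL_def .
    define Y where "Y = {i\<in>S. p i = 1 \<or> p i = 2} \<union> {i\<in>J. p' i = 1 \<or> p' i = 2}"
    have Ysub: "Y \<subseteq> LL" using S unfolding Y_def J_def LL_def by auto
    have jY: "j \<in> Y" using jS unfolding Y_def p_def by auto
    have eq: "(\<Sum>z\<in>Pow LL. Dk {} z * Qk z Y) = (\<Sum>z\<in>Pow LL. Qk {} z * Dk z Y)"
      using kop_eqD[OF \<open>kop nL _ = kop nL _\<close>, of "{}" Y] Ysub unfolding LL_def by simp
    have l: "(\<Sum>z\<in>Pow LL. Dk {} z * Qk z Y) = Qk {} Y"
    proof -
      have "(\<Sum>z\<in>Pow LL. Dk {} z * Qk z Y) = Dk {} {} * Qk {} Y"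
      proof (rule sum_single)
        fix z assume z: "z \<in> Pow LL" "z \<noteq> {}"
        show "Dk {} z * Qk z Y = 0"
        proof (cases "z \<inter> {j} = {}")
          case True
          then have "z \<inter> (LL - {j}) \<noteq> {}" using z by auto
          then show ?thesis unfolding Dk_def id_fun_def by auto
        next
          case False then show ?thesis unfolding Dk_def P0_def by auto
        qed
      qed (auto simp: LL_def)
      then show ?thesis by (simp add: Dk_def P0_def id_fun_def)
    qed
    have r: "(\<Sum>z\<in>Pow LL. Qk {} z * Dk z Y) = 0"
      using jY by (intro sum.neutral) (auto simp: Dk_def P0_def)
    have "Qk {} Y = 0" using eq l r by simp
    moreover have "Qk {} Y \<noteq> 0"
    proof -
      have fS: "finite S" using S finite_subset by blast
      have fJ: "finite J" unfolding J_def LL_def by simp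
      have 1: "PL {} (Y \<inter> S) \<noteq> 0" unfolding PL_def
        by (rule pauli_fun_nz) (auto simp: fS p_def Y_def J_def)
      have 2: "PJ {} (Y \<inter> (LL - S)) \<noteq> 0" unfolding PJ(3)
        by (rule pauli_fun_nz) (use PJ phase_nz fJ in \<open>auto simp: Y_def J_def\<close>)
      show ?thesis using 1 2 unfolding Qk_def by simp
    qed
    ultimately show False by simp
  qed
  ultimately have "j \<in> entanglement_wedge n nL V ({..<n} - R)" by blast
  then have "correctable n nL V {j} R" by (simp add: entanglement_wedge_def RR)
  then show ?thesis unfolding correctable_def impl_def csp_iff by blast
qed

end

theorem lemma6:
  fixes n nL :: nat and G :: "complex mat set" and V :: "complex mat" and S R :: "nat set"
  assumes "stabilizer_code n nL G V"
    and "S \<subseteq> {..<nL}"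
    and "R \<subseteq> {..<n}"
    and "complementary_recovery n nL V R"
    and "dressed_cleanable n nL V S R"
  shows "correctable n nL V S R"
proof -
  have Vc: "V \<in> carrier_mat (2^n) (2^nL)" and iso: "mat_adjoint V * V = 1\<^sub>m (2^nL)"
    using assms(1) by (auto simp: stabilizer_code_def)
  interpret mainloc V n nL R using Vc iso assms(3) by unfold_locales
  have "\<forall>j\<in>S. \<forall>E. impl {j} E" using single[OF assms(4) assms(5) assms(2)] by blast
  then have "\<forall>K. impl S K" using impl_all[of S] assms(2) finite_subset by blast
  then show ?thesis unfolding correctable_def impl_def csp_iff by blast
qed

end
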